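(* Let $G=(U,E)$ be a tree and $\mathcal S\subset 2^U$ a category system such that $(G,\mathcal S)$ is internally connected and shattered. Then the greedy category-based routing strategy ROUTING routes messages correctly between every pair of vertices.
   Context: $N(s)$ denotes the set of neighbors of $s$ in $G$. $(G,\mathcal S)$ is internally connected if for every $C\in\mathcal S$ the subgraph of $G$ induced by $C$ is connected. $(G,\mathcal S)$ is shattered if for all $s,t\in U$ with $s\neq t$ there exist $u\in N(s)$ and $C\in\mathcal S$ with $u\in C$, $t\in C$ and $s\notin C$ (possibly $u=t$). For $u\in U$ let $\mathrm{cat}(u)=\{C\in\mathcal S: u\in C\}$, and $d(s,t)=|\mathrm{cat}(t)\setminus\mathrm{cat}(s)|$. ROUTING: a node $u$ holding a message for destination $w\neq u$ forwards it to a neighbor $v\in N(u)$ with $d(v,w)<d(u,w)$. ROUTING routes correctly between all pairs if for every ordered pair of distinct vertices $u,w$ there is a neighbor $v\in N(u)$ with $d(v,w)<d(u,w)$. *)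

theory Defs
  imports Main
begin

definition simple_graph :: "'a set \<Rightarrow> ('a \<Rightarrow> 'a \<Rightarrow> bool) \<Rightarrow> bool" where
  "simple_graph U E \<longleftrightarrow> (\<forall>u v. E u v \<longrightarrow> u \<in> U \<and> v \<in> U \<and> E v u \<and> u \<noteq> v)"

definition nbrs :: "('a \<Rightarrow> 'a \<Rightarrow> bool) \<Rightarrow> 'a \<Rightarrow> 'a set" where
  "nbrs E s = {u. E s u}"

fun walk :: "('a \<Rightarrow> 'a \<Rightarrow> bool) \<Rightarrow> 'a list \<Rightarrow> bool" where
  "walk E [] = False"
| "walk E [x] = True"
| "walk E (x # y # xs) = (E x y \<and> walk E (y # xs))"

definition induced_connected :: "('a \<Rightarrow> 'a \<Rightarrow> bool) \<Rightarrow> 'a set \<Rightarrow> bool" where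
  "induced_connected E C \<longleftrightarrow>
     (\<forall>u\<in>C. \<forall>v\<in>C. \<exists>p. walk E p \<and> hd p = u \<and> last p = v \<and> set p \<subseteq> C)"

definition has_cycle :: "('a \<Rightarrow> 'a \<Rightarrow> bool) \<Rightarrow> bool" where
  "has_cycle E \<longleftrightarrow> (\<exists>p. length p \<ge> 3 \<and> distinct p \<and> walk E p \<and> E (last p) (hd p))"

definition is_tree :: "'a set \<Rightarrow> ('a \<Rightarrow> 'a \<Rightarrow> bool) \<Rightarrow> bool" where
  "is_tree U E \<longleftrightarrow> finite U \<and> U \<noteq> {} \<and> simple_graph U E \<and> induced_connected E U \<and> \<not> has_cycle E"

definition internally_connected :: "('a \<Rightarrow> 'a \<Rightarrow> bool) \<Rightarrow> 'a set set \<Rightarrow> bool" where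
  "internally_connected E S \<longleftrightarrow> (\<forall>C\<in>S. induced_connected E C)"

definition shattered :: "'a set \<Rightarrow> ('a \<Rightarrow> 'a \<Rightarrow> bool) \<Rightarrow> 'a set set \<Rightarrow> bool" where
  "shattered U E S \<longleftrightarrow> (\<forall>s\<in>U. \<forall>t\<in>U. s \<noteq> t \<longrightarrow>
      (\<exists>u\<in>nbrs E s. \<exists>C\<in>S. u \<in> C \<and> t \<in> C \<and> s \<notin> C))"

definition cat :: "'a set set \<Rightarrow> 'a \<Rightarrow> 'a set set" where
  "cat S u = {C\<in>S. u \<in> C}"

definition cdist :: "'a set set \<Rightarrow> 'a \<Rightarrow> 'a \<Rightarrow> nat" where
  "cdist S s t = card (cat S t - cat S s)"

definition routes_correctly :: "'a set \<Rightarrow> ('a \<Rightarrow> 'a \<Rightarrow> bool) \<Rightarrow> 'a set set \<Rightarrow> bool" where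
  "routes_correctly U E S \<longleftrightarrow> (\<forall>u\<in>U. \<forall>w\<in>U. u \<noteq> w \<longrightarrow>
      (\<exists>v\<in>nbrs E u. cdist S v w < cdist S u w))"

end

theory Submission
  imports Defs
begin

lemma walk_nonempty: "walk E p \<Longrightarrow> p \<noteq> []"
  by (cases p) auto

lemma walk_Cons: "walk E (x # q) \<longleftrightarrow> (q = [] \<or> (E x (hd q) \<and> walk E q))"
  by (cases q) auto

lemma walk_concat: "walk E p \<Longrightarrow> walk E q \<Longrightarrow> last p = hd q \<Longrightarrow> walk E (p @ tl q)"
proof (induction p)
  case Nil then show ?case by simp
next
  case (Cons x p)
  show ?case
  proof (cases "p = []")
    case True
    have "q \<noteq> []" using Cons.prems walk_nonempty by blast
    then show ?thesis using True Cons.prems by (cases q) auto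
  next
    case False
    then have "walk E p" "E x (hd p)" using Cons.prems by (auto simp: walk_Cons)
    then have "walk E (p @ tl q)" using Cons False by simp
    then show ?thesis using False \<open>E x (hd p)\<close> by (simp add: walk_Cons)
  qed
qed

lemma walk_rev:
  assumes sym: "\<And>a b. E a b \<Longrightarrow> E b a"
  shows "walk E p \<Longrightarrow> walk E (rev p)"
proof (induction p)
  case Nil then show ?case by simp
next
  case (Cons x p)
  show ?case
  proof (cases "p = []")
    case True then show ?thesis by simp
  next
    case False
    then have w: "walk E p" "E x (hd p)" using Cons.prems by (auto simp: walk_Cons)
    have "walk E (rev p)" using Cons.IH w by simp
    moreover have "walk E [hd p, x]" using w sym by auto
    ultimately have "walk E (rev p @ tl [hd p, x])"
      by (intro walk_concat) (auto simp: last_rev False)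
    then show ?thesis by simp
  qed
qed

lemma walk_suffix: "walk E (a @ b) \<Longrightarrow> b \<noteq> [] \<Longrightarrow> walk E b"
proof (induction a)
  case Nil then show ?case by simp
next
  case (Cons x a)
  then have "walk E (a @ b)" by (auto simp: walk_Cons)
  then show ?case using Cons by auto
qed

lemma walk_distinct:
  "walk E p \<Longrightarrow> \<exists>q. walk E q \<and> hd q = hd p \<and> last q = last p \<and> set q \<subseteq> set p \<and> distinct q"
proof (induction p)
  case Nil then show ?case by simp
next
  case (Cons x p)
  show ?case
  proof (cases "p = []")
    case True then show ?thesis by (intro exI[of _ "[x]"]) auto
  next
    case False
    then have wp: "walk E p" and ex: "E x (hd p)" using Cons.prems by (auto simp: walk_Cons)
    obtain q where q: "walk E q" "hd q = hd p" "last q = last p" "set q \<subseteq> set p" "distinct q"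
      using Cons.IH wp by blast
    have qne: "q \<noteq> []" using q(1) walk_nonempty by blast
    show ?thesis
    proof (cases "x \<in> set q")
      case True
      then obtain a b where ab: "q = a @ x # b" by (meson split_list)
      have "walk E (x # b)" using q(1) ab walk_suffix by blast
      moreover have "last (x # b) = last (x # p)" using q(3) ab False by simp
      moreover have "set (x # b) \<subseteq> set (x # p)" using q(4) ab by auto
      moreover have "distinct (x # b)" using q(5) ab by simp
      ultimately show ?thesis by (intro exI[of _ "x # b"]) simp
    next
      case xq: False
      have "walk E (x # q)" using q qne ex by (simp add: walk_Cons)
      then show ?thesis using q qne xq False by (intro exI[of _ "x # q"]) auto
    qed
  qed
qed

lemma last_occ:
  "walk E p \<Longrightarrow> u \<in> set p \<Longrightarrow> last p \<noteq> u \<Longrightarrow>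
   \<exists>q. walk E q \<and> E u (hd q) \<and> last q = last p \<and> u \<notin> set q \<and> set q \<subseteq> set p"
proof (induction p)
  case Nil then show ?case by simp
next
  case (Cons x p)
  have pne: "p \<noteq> []" using Cons.prems by auto
  then have wp: "walk E p" and ex: "E x (hd p)" using Cons.prems by (auto simp: walk_Cons)
  show ?case
  proof (cases "u \<in> set p")
    case True
    then obtain q where "walk E q \<and> E u (hd q) \<and> last q = last p \<and> u \<notin> set q \<and> set q \<subseteq> set p"
      using Cons.IH wp Cons.prems pne by auto
    then show ?thesis using pne by (intro exI[of _ q]) auto
  next
    case False
    then have "x = u" using Cons.prems by auto
    then show ?thesis using wp ex pne False by (intro exI[of _ p]) auto
  qed
qed

lemma unique_nb:
  assumes nc: "\<not> has_cycle E" and sym: "\<And>a b. E a b \<Longrightarrow> E b a"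
    and e1: "E u v" and e2: "E u v'"
    and p: "walk E p" "hd p = v" "last p = w" "u \<notin> set p"
    and p': "walk E p'" "hd p' = v'" "last p' = w" "u \<notin> set p'"
  shows "v = v'"
proof (rule ccontr)
  assume ne: "v \<noteq> v'"
  define r where "r = p @ tl (rev p')"
  have wr': "walk E (rev p')" using walk_rev[OF _ p'(1)] sym by blast
  have p'ne: "p' \<noteq> []" using p'(1) walk_nonempty by blast
  have pne: "p \<noteq> []" using p(1) walk_nonempty by blast
  have hr': "hd (rev p') = w" using p'(3) p'ne by (simp add: hd_rev)
  have wr: "walk E r" unfolding r_def using walk_concat[OF p(1) wr'] p(3) hr' by simp
  have hr: "hd r = v" using p pne r_def by simp
  have lr: "last r = v'"
  proof (cases "tl (rev p') = []")
    case True
    then have "rev p' = [w]" using hr' p'ne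
      by (metis Nil_is_rev_conv list.collapse)
    then have "p' = [w]" by simp
    then show ?thesis using True r_def p p'(2) by simp
  next
    case False
    then have "last r = last (tl (rev p'))" unfolding r_def by simp
    also have "\<dots> = last (rev p')" using False
      by (metis last_tl)
    also have "\<dots> = v'" using p'(2) p'ne by (simp add: last_rev)
    finally show ?thesis .
  qed
  have "set (tl (rev p')) \<subseteq> set (rev p')" by (cases "rev p'") auto
  then have ur: "u \<notin> set r" unfolding r_def using p(4) p'(4) by auto
  obtain d where d: "walk E d" "hd d = v" "last d = v'" "set d \<subseteq> set r" "distinct d"
    using walk_distinct[OF wr] hr lr by blast
  have dne: "d \<noteq> []" using d(1) walk_nonempty by blast
  have "length d \<ge> 2"
  proof (rule ccontr)
    assume "\<not> 2 \<le> length d"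
    then have "length d = 1" using dne by (cases d) (auto simp: not_le)
    then obtain a where "d = [a]" by (cases d) auto
    then show False using d ne by simp
  qed
  moreover have "u \<notin> set d" using d(4) ur by blast
  moreover have "walk E (u # d)" using d e1 dne by (simp add: walk_Cons)
  moreover have "E (last (u # d)) (hd (u # d))" using d dne e2 sym by simp
  ultimately have "has_cycle E" unfolding has_cycle_def
    using d(5) by (intro exI[of _ "u # d"]) auto
  then show False using nc by simp
qed

theorem lemma2:
  fixes U :: "'a set" and E :: "'a \<Rightarrow> 'a \<Rightarrow> bool" and S :: "'a set set"
  assumes "is_tree U E"
    and "S \<subseteq> Pow U"
    and "internally_connected E S"
    and "shattered U E S"
  shows "routes_correctly U E S"
  unfolding routes_correctly_def
proof (intro ballI impI)
  fix u w assume u: "u \<in> U" and w: "w \<in> U" and uw: "u \<noteq> w"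
  have fin: "finite U" and nc: "\<not> has_cycle E" and sg: "simple_graph U E"
    using assms(1) unfolding is_tree_def by auto
  have sym: "\<And>a b. E a b \<Longrightarrow> E b a" using sg unfolding simple_graph_def by blast
  have finS: "finite S" using assms(2) fin by (meson finite_Pow_iff finite_subset)
  obtain v C0 where v: "v \<in> nbrs E u" and C0: "C0 \<in> S" "v \<in> C0" "w \<in> C0" "u \<notin> C0"
    using assms(4) u w uw unfolding shattered_def by blast
  have euv: "E u v" using v unfolding nbrs_def by simp
  obtain p0 where p0: "walk E p0" "hd p0 = v" "last p0 = w" "set p0 \<subseteq> C0"
    using assms(3) C0 unfolding internally_connected_def induced_connected_def by blast
  have up0: "u \<notin> set p0" using p0(4) C0(4) by blast
  have sub: "cat S w - cat S v \<subseteq> cat S w - cat S u"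
  proof
    fix C assume Cin: "C \<in> cat S w - cat S v"
    show "C \<in> cat S w - cat S u"
    proof (rule ccontr)
      assume "C \<notin> cat S w - cat S u"
      then have CS: "C \<in> S" "u \<in> C" "w \<in> C" "v \<notin> C" using Cin unfolding cat_def by auto
      obtain p where p: "walk E p" "hd p = u" "last p = w" "set p \<subseteq> C"
        using assms(3) CS unfolding internally_connected_def induced_connected_def by blast
      have "u \<in> set p" using p(1,2) walk_nonempty by (metis list.set_sel(1))
      then obtain q where q: "walk E q" "E u (hd q)" "last q = w" "u \<notin> set q" "set q \<subseteq> set p"
        using last_occ[OF p(1)] p(3) uw by metis
      have "v = hd q" using unique_nb[OF nc sym euv q(2) p0(1-3) up0 q(1) refl q(3,4)] .
      moreover have "hd q \<in> set q" using q(1) walk_nonempty by (metis list.set_sel(1))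
      ultimately show False using q(5) p(4) CS(4) by blast
    qed
  qed
  have "C0 \<in> cat S w - cat S u" "C0 \<notin> cat S w - cat S v" using C0 unfolding cat_def by auto
  then have "cat S w - cat S v \<subset> cat S w - cat S u" using sub by blast
  moreover have "finite (cat S w - cat S u)" using finS unfolding cat_def by simp
  ultimately have "cdist S v w < cdist S u w" unfolding cdist_def by (rule psubset_card_mono[rotated])
  then show "\<exists>v\<in>nbrs E u. cdist S v w < cdist S u w" using v by blast
qed

end
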